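(* Let $D \subset \mathbb{Z}^m \setminus \{\mathbf{0}\}$ be finite with $D = -D$, and let $f(z) = \sum_{d \in D} c_d z_1^{d_1}\cdots z_m^{d_m}$ be a non-zero Laurent polynomial with $c_{-d} = \overline{c_d}$ for all $d\in D$. Let $F_+ = \{z \in \mathbb{T}^m : f(z) > 0\}$, $F_- = \{z \in \mathbb{T}^m : f(z) < 0\}$, $F_0 = \{z \in \mathbb{T}^m : f(z) = 0\}$, and for $n \geq 1$ let \[ B_n = \left\{ \left(e^{2\pi i a_1/2^n}, \ldots, e^{2\pi i a_m/2^n}\right) : (a_1,\ldots,a_m) \in \mathbb{Z}^m \right\} \subset \mathbb{T}^m. \] Then \[ \lim_{n\to\infty} \frac{|F_+ \cap B_n|}{2^{nm}} = \lambda_m(F_+), \quad \lim_{n\to\infty} \frac{|F_- \cap B_n|}{2^{nm}} = \lambda_m(F_-), \quad \lim_{n\to\infty} \frac{|F_0 \cap B_n|}{2^{nm}} = 0. \]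
   Context: $\mathbb{T}$ is the unit circle; $\lambda_m$ is the normalized Lebesgue measure on $\mathbb{T}^m$ with $\lambda_m(\mathbb{T}^m)=1$. Such $f$ is real-valued on $\mathbb{T}^m$. *)

theory Defs
  imports "HOL-Analysis.Analysis"
begin

definition torus :: "(complex ^ 'm::finite) set" where
  "torus = {z. \<forall>j. cmod (z $ j) = 1}"

definition torus_param :: "real ^ 'm::finite \<Rightarrow> complex ^ 'm" where
  "torus_param t = (\<chi> j. exp (2 * of_real pi * \<i> * of_real (t $ j)))"

text \<open>Normalised Lebesgue (Haar) measure on T^m: push-forward of Lebesgue
  measure on the unit cube [0,1]^m (which has volume 1) under the angle map.\<close>
definition torus_measure :: "(complex ^ 'm::finite) measure" where
  "torus_measure = distr (density lborel (indicator (cbox (0::real^'m) One))) borel torus_param"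

definition laurent :: "(int ^ 'm::finite) set \<Rightarrow> (int ^ 'm \<Rightarrow> complex) \<Rightarrow> complex ^ 'm \<Rightarrow> complex" where
  "laurent D c z = (\<Sum>d\<in>D. c d * (\<Prod>j\<in>UNIV. (z $ j) powi (d $ j)))"

definition grid :: "nat \<Rightarrow> (complex ^ 'm::finite) set" where
  "grid n = {(\<chi> j. exp (2 * of_real pi * \<i> * of_int (a $ j) / 2 ^ n)) | a :: int ^ 'm. True}"

end

theory Submission
  imports Defs "HOL-Computational_Algebra.Polynomial"
begin

definition ee :: "real \<Rightarrow> complex" where
  "ee x = exp (2 * of_real pi * \<i> * of_real x)"

lemma ee_add: "ee (x + y) = ee x * ee y"
  by (simp add: ee_def distrib_left exp_add)

lemma ee_nonzero [simp]: "ee x \<noteq> 0"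
  by (simp add: ee_def)

lemma ee_power: "ee x ^ n = ee (real n * x)"
  by (simp add: ee_def exp_of_nat_mult[symmetric] mult_ac)

lemma ee_eq_1: "ee x = 1 \<Longrightarrow> x \<in> \<int>"
proof -
  assume "ee x = 1"
  then obtain n :: int where "2 * pi * x = of_int (2 * n) * pi"
    by (auto simp: ee_def exp_eq_1)
  then have "x = of_int n" by simp
  then show ?thesis by simp
qed

lemma countable_ee_fiber: "countable {y. ee y = r}"
proof (cases "{y. ee y = r} = {}")
  case True then show ?thesis by simp
next
  case False
  then obtain y1 where y1: "ee y1 = r" by auto
  have "{y. ee y = r} \<subseteq> (\<lambda>n::int. y1 + of_int n) ` UNIV"
  proof
    fix y assume "y \<in> {y. ee y = r}"
    moreover have "ee y = ee (y - y1) * ee y1" by (simp add: ee_add[symmetric])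
    ultimately have "ee (y - y1) * ee y1 = 1 * ee y1" using y1 by simp
    then have "ee (y - y1) = 1" by (subst (asm) mult_cancel_right) simp
    then have "y - y1 \<in> \<int>" by (rule ee_eq_1)
    then obtain n where "y - y1 = of_int n" by (auto elim: Ints_cases)
    then show "y \<in> (\<lambda>n::int. y1 + of_int n) ` UNIV" by (auto intro!: image_eqI[of _ _ n])
  qed
  then show ?thesis by (rule countable_subset) simp
qed

lemma countable_zeros_1d:
  fixes K :: "int set" and a :: "int \<Rightarrow> complex"
  assumes K: "finite K" "k0 \<in> K" "a k0 \<noteq> 0"
  shows "countable {y::real. (\<Sum>k\<in>K. a k * ee (of_int k * y)) = 0}"
proof -
  define N where "N = (\<Sum>k\<in>K. \<bar>k\<bar>)"
  have kN: "k + N \<ge> 0" if "k \<in> K" for k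
  proof -
    have "\<bar>k\<bar> \<le> N" unfolding N_def using K(1) that by (intro member_le_sum[of k K abs]) auto
    then show ?thesis by linarith
  qed
  define p where "p = (\<Sum>k\<in>K. monom (a k) (nat (k + N)))"
  have "coeff p (nat (k0 + N)) = (\<Sum>k\<in>K. if nat (k + N) = nat (k0 + N) then a k else 0)"
    by (simp add: p_def coeff_sum coeff_monom)
  also have "\<dots> = (\<Sum>k\<in>K. if k = k0 then a k else 0)"
  proof (rule sum.cong)
    fix k assume "k \<in> K"
    then have "nat (k + N) = nat (k0 + N) \<longleftrightarrow> k = k0" using kN[of k] kN[of k0] K by auto
    then show "(if nat (k + N) = nat (k0 + N) then a k else 0) = (if k = k0 then a k else 0)" by simp
  qed simp
  also have "\<dots> = a k0" using K by simp
  finally have "p \<noteq> 0" using K by auto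
  then have fin: "finite {z. poly p z = 0}" by (rule poly_roots_finite)
  have "{y::real. (\<Sum>k\<in>K. a k * ee (of_int k * y)) = 0} \<subseteq> (\<Union>r\<in>{z. poly p z = 0}. {y. ee y = r})"
  proof safe
    fix y :: real assume y: "(\<Sum>k\<in>K. a k * ee (of_int k * y)) = 0"
    have "poly p (ee y) = (\<Sum>k\<in>K. a k * ee y ^ nat (k + N))"
      by (simp add: p_def poly_sum poly_monom)
    also have "\<dots> = (\<Sum>k\<in>K. a k * ee (of_int k * y) * ee (of_int N * y))"
    proof (rule sum.cong)
      fix k assume "k \<in> K"
      then have "real (nat (k + N)) = of_int k + of_int N" using kN by simp
      then show "a k * ee y ^ nat (k + N) = a k * ee (of_int k * y) * ee (of_int N * y)"
        by (simp add: ee_power ee_add[symmetric] distrib_right)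
    qed simp
    also have "\<dots> = (\<Sum>k\<in>K. a k * ee (of_int k * y)) * ee (of_int N * y)"
      by (simp add: sum_distrib_right)
    also have "\<dots> = 0" using y by simp
    finally show "y \<in> (\<Union>r\<in>{z. poly p z = 0}. {y. ee y = r})" by auto
  qed
  moreover have "countable (\<Union>r\<in>{z. poly p z = 0}. {y. ee y = r})"
    using fin by (intro countable_UN countable_finite countable_ee_fiber) auto
  ultimately show ?thesis by (rule countable_subset)
qed

lemma ee_measurable [measurable]: "ee \<in> borel_measurable borel"
  by (rule borel_measurable_continuous_onI) (simp add: ee_def continuous_intros)

definition tp :: "'i set \<Rightarrow> 's set \<Rightarrow> ('s \<Rightarrow> 'i \<Rightarrow> int) \<Rightarrow> ('s \<Rightarrow> complex) \<Rightarrow> ('i \<Rightarrow> real) \<Rightarrow> complex" where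
  "tp I S freq c x = (\<Sum>s\<in>S. c s * ee (\<Sum>j\<in>I. of_int (freq s j) * x j))"

lemma tp_measurable [measurable]: "tp I S freq c \<in> borel_measurable (PiM I (\<lambda>_. lborel))"
  unfolding tp_def by measurable

lemma null_zeros_PiM:
  fixes I :: "'i set"
  assumes "finite I"
  shows "finite S \<Longrightarrow> inj_on freq S \<Longrightarrow> (\<forall>s\<in>S. \<forall>j. j \<notin> I \<longrightarrow> freq s j = 0) \<Longrightarrow> s0 \<in> S \<Longrightarrow> c s0 \<noteq> 0
    \<Longrightarrow> emeasure (PiM I (\<lambda>_. lborel)) {x \<in> space (PiM I (\<lambda>_. lborel)). tp I S freq c x = 0} = 0"
  using assms
proof (induction I arbitrary: S freq c s0 rule: finite_induct)
  case empty
  have "S = {s0}"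
  proof safe
    fix s assume "s \<in> S"
    then have "freq s = freq s0" using empty by auto
    then show "s = s0" using empty \<open>s \<in> S\<close> by (auto dest: inj_onD)
  qed (use empty in auto)
  then show ?case using empty by (simp add: tp_def)
next
  case (insert i I)
  interpret product_sigma_finite "\<lambda>_. lborel::real measure" by standard
  define k0 where "k0 = freq s0 i"
  define S' where "S' = {s \<in> S. freq s i = k0}"
  define freq' where "freq' = (\<lambda>s. (freq s)(i := 0))"
  define A where "A = (\<lambda>k x. tp I {s \<in> S. freq s i = k} freq' c x)"
  have "emeasure (PiM I (\<lambda>_. lborel)) {x \<in> space (PiM I (\<lambda>_. lborel)). tp I S' freq' c x = 0} = 0"
  proof (rule insert.IH)
    show "finite S'" using insert by (simp add: S'_def)
    show "inj_on freq' S'"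
    proof (rule inj_onI)
      fix s t assume "s \<in> S'" "t \<in> S'" "freq' s = freq' t"
      then have "freq s = freq t" unfolding freq'_def S'_def
        by (auto simp: fun_eq_iff split: if_splits) (metis fun_upd_apply)
      then show "s = t" using insert.prems(2) \<open>s \<in> S'\<close> \<open>t \<in> S'\<close> by (auto simp: S'_def dest: inj_onD)
    qed
    show "\<forall>s\<in>S'. \<forall>j. j \<notin> I \<longrightarrow> freq' s j = 0" using insert.prems(3) by (auto simp: S'_def freq'_def)
    show "s0 \<in> S'" using insert by (simp add: S'_def k0_def)
    show "c s0 \<noteq> 0" by fact
  qed
  then have AE: "AE x in PiM I (\<lambda>_. lborel). A k0 x \<noteq> 0"
    unfolding A_def S'_def by (intro AE_I'[of "{x \<in> space (PiM I (\<lambda>_. lborel)). tp I S' freq' c x = 0}"])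
      (auto simp: S'_def null_sets_def)
  have split: "tp (insert i I) S freq c (x(i := y)) = (\<Sum>k\<in>(\<lambda>s. freq s i) ` S. A k x * ee (of_int k * y))" for x y
  proof -
    have "tp (insert i I) S freq c (x(i := y)) = (\<Sum>s\<in>S. c s * ee (\<Sum>j\<in>I. of_int (freq' s j) * x j) * ee (of_int (freq s i) * y))"
      unfolding tp_def
    proof (rule sum.cong)
      fix s assume "s \<in> S"
      have "(\<Sum>j\<in>insert i I. of_int (freq s j) * (x(i := y)) j) = of_int (freq s i) * y + (\<Sum>j\<in>I. of_int (freq' s j) * x j)"
        using insert.hyps by (simp add: freq'_def) (intro sum.cong, auto)
      then show "c s * ee (\<Sum>j\<in>insert i I. of_int (freq s j) * (x(i := y)) j) = c s * ee (\<Sum>j\<in>I. of_int (freq' s j) * x j) * ee (of_int (freq s i) * y)"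
        by (simp add: ee_add mult_ac)
    qed simp
    also have "\<dots> = (\<Sum>k\<in>(\<lambda>s. freq s i) ` S. \<Sum>s\<in>{s \<in> S. freq s i = k}. c s * ee (\<Sum>j\<in>I. of_int (freq' s j) * x j) * ee (of_int (freq s i) * y))"
      using insert.prems(1) by (rule sum.image_gen)
    also have "\<dots> = (\<Sum>k\<in>(\<lambda>s. freq s i) ` S. A k x * ee (of_int k * y))"
      unfolding A_def tp_def sum_distrib_right by (intro sum.cong refl) auto
    finally show ?thesis .
  qed
  let ?M = "PiM (insert i I) (\<lambda>_. lborel::real measure)"
  let ?Z = "{x \<in> space ?M. tp (insert i I) S freq c x = 0}"
  have "emeasure ?M ?Z = (\<integral>\<^sup>+ x. indicator ?Z x \<partial>?M)"
    by (subst nn_integral_indicator) auto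
  also have "\<dots> = (\<integral>\<^sup>+ x. (\<integral>\<^sup>+ y. indicator ?Z (x(i := y)) \<partial>lborel) \<partial>PiM I (\<lambda>_. lborel))"
    using insert.hyps by (intro product_nn_integral_insert) auto
  also have "\<dots> = 0"
  proof -
    have AE0: "AE x in PiM I (\<lambda>_. lborel). (\<integral>\<^sup>+ y. indicator ?Z (x(i := y)) \<partial>lborel) = 0"
      using AE
    proof eventually_elim
      case (elim x)
      have "(\<integral>\<^sup>+ y. indicator ?Z (x(i := y)) \<partial>lborel) \<le> (\<integral>\<^sup>+ y. indicator {y. (\<Sum>k\<in>(\<lambda>s. freq s i) ` S. A k x * ee (of_int k * y)) = 0} y \<partial>lborel)"
        by (intro nn_integral_mono) (auto simp: split indicator_def)
      also have "\<dots> = emeasure lborel {y. (\<Sum>k\<in>(\<lambda>s. freq s i) ` S. A k x * ee (of_int k * y)) = 0}"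
        by (intro nn_integral_indicator) measurable
      also have "\<dots> = 0"
        using insert.prems(1,4) elim
        by (intro emeasure_lborel_countable countable_zeros_1d[of _ k0]) (auto simp: k0_def)
      finally show ?case by simp
    qed
    show ?thesis by (subst nn_integral_cong_AE[OF AE0]) simp
  qed
  finally show ?case .
qed

definition dv :: "int ^ 'm::finite \<Rightarrow> real ^ 'm" where
  "dv d = (\<chi> j. real_of_int (d $ j))"

lemma dv_inner_basis:
  fixes b :: "real ^ 'm::finite"
  assumes "b \<in> Basis"
  shows "dv d \<bullet> b = of_int \<lfloor>dv d \<bullet> b\<rfloor>"
proof -
  obtain j where "b = axis j 1" using assms by (auto simp: Basis_vec_def)
  then show ?thesis by (simp add: inner_axis dv_def)
qed

lemma null_zeros_vec:
  fixes D :: "(int ^ 'm::finite) set" and c :: "int ^ 'm \<Rightarrow> complex"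
  assumes "finite D" "d0 \<in> D" "c d0 \<noteq> 0"
  shows "{t::real^'m. (\<Sum>d\<in>D. c d * ee (dv d \<bullet> t)) = 0} \<in> null_sets lborel"
proof -
  let ?P = "PiM (Basis::(real^'m) set) (\<lambda>_. lborel::real measure)"
  define \<phi> where "\<phi> = (\<lambda>f. \<Sum>b\<in>(Basis::(real^'m) set). f b *\<^sub>R b)"
  define freq where "freq = (\<lambda>d (b::real^'m). if b \<in> Basis then \<lfloor>dv d \<bullet> b\<rfloor> else 0)"
  let ?Z = "{t::real^'m. (\<Sum>d\<in>D. c d * ee (dv d \<bullet> t)) = 0}"
  have Zm: "?Z \<in> sets borel" by measurable
  have phim: "\<phi> \<in> measurable ?P borel" unfolding \<phi>_def by measurable
  have eq: "dv d \<bullet> \<phi> x = (\<Sum>b\<in>Basis. of_int (freq d b) * x b)" for d x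
  proof -
    have "dv d \<bullet> \<phi> x = (\<Sum>b\<in>Basis. x b * (dv d \<bullet> b))"
      by (simp add: \<phi>_def inner_sum_right)
    also have "\<dots> = (\<Sum>b\<in>Basis. of_int (freq d b) * x b)"
      by (intro sum.cong refl) (simp add: freq_def dv_inner_basis[symmetric])
    finally show ?thesis .
  qed
  have "emeasure lborel ?Z = emeasure (distr ?P borel \<phi>) ?Z"
    by (simp add: \<phi>_def lborel_eq[symmetric])
  also have "\<dots> = emeasure ?P (\<phi> -` ?Z \<inter> space ?P)"
    by (rule emeasure_distr[OF phim Zm])
  also have "\<phi> -` ?Z \<inter> space ?P = {x \<in> space ?P. tp Basis D freq c x = 0}"
    by (auto simp: tp_def eq)
  also have "emeasure ?P \<dots> = 0"
  proof (rule null_zeros_PiM)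
    show "inj_on freq D"
    proof (rule inj_onI)
      fix d d' assume eq: "freq d = freq d'"
      have "\<lfloor>dv d \<bullet> axis j 1\<rfloor> = \<lfloor>dv d' \<bullet> axis j 1\<rfloor>" for j
      proof -
        have b: "axis j (1::real) \<in> (Basis :: (real^'m) set)" by simp
        have "freq d (axis j 1) = freq d' (axis j 1)" using eq by simp
        then show ?thesis using b unfolding freq_def by (simp only: if_True)
      qed
      then show "d = d'" by (simp add: vec_eq_iff inner_axis dv_def)
    qed
  qed (use assms in \<open>auto simp: freq_def\<close>)
  finally show ?thesis using Zm by (simp add: null_sets_def)
qed

lemma One_cart_nth [simp]: "(One::real^'m::finite) $ i = 1"
  by (simp add: cart_eq_inner_axis)

definition An :: "nat \<Rightarrow> (int ^ 'm::finite) set" where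
  "An n = {a. \<forall>j. 0 \<le> a $ j \<and> a $ j < 2 ^ n}"

definition pt :: "nat \<Rightarrow> int ^ 'm::finite \<Rightarrow> real ^ 'm" where
  "pt n a = (\<chi> j. real_of_int (a $ j) / 2 ^ n)"

definition fl :: "nat \<Rightarrow> real ^ 'm::finite \<Rightarrow> int ^ 'm" where
  "fl n t = (\<chi> j. \<lfloor>2 ^ n * t $ j\<rfloor>)"

definition cell :: "nat \<Rightarrow> int ^ 'm::finite \<Rightarrow> (real ^ 'm) set" where
  "cell n a = {t. \<forall>j. real_of_int (a $ j) / 2 ^ n \<le> t $ j \<and> t $ j < (real_of_int (a $ j) + 1) / 2 ^ n}"

lemma finite_An: "finite (An n)"
proof -
  have "An n \<subseteq> vec_lambda ` (PiE UNIV (\<lambda>_. {0..<2 ^ n}))"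
  proof
    fix a :: "int ^ 'm" assume "a \<in> An n"
    then have "(\<lambda>j. a $ j) \<in> PiE UNIV (\<lambda>_. {0..<2 ^ n})" by (auto simp: An_def)
    then show "a \<in> vec_lambda ` (PiE UNIV (\<lambda>_. {0..<2 ^ n}))"
      by (intro image_eqI[of _ _ "\<lambda>j. a $ j"]) auto
  qed
  then show ?thesis by (rule finite_subset) (auto intro!: finite_imageI finite_PiE)
qed

lemma cell_iff: "t \<in> cell n a \<longleftrightarrow> fl n t = a"
proof -
  have "real_of_int k / 2 ^ n \<le> x \<and> x < (real_of_int k + 1) / 2 ^ n \<longleftrightarrow> \<lfloor>2 ^ n * x\<rfloor> = k" for k x
    by (simp add: floor_eq_iff pos_divide_le_eq pos_less_divide_eq mult.commute)
  then show ?thesis by (simp add: cell_def fl_def vec_eq_iff)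
qed

lemma cell_measurable [measurable]: "cell n a \<in> sets borel"
  unfolding cell_def by measurable

lemma cell_subset: "a \<in> An n \<Longrightarrow> cell n a \<subseteq> cbox 0 (One::real^'m::finite)"
proof
  fix t assume a: "a \<in> An n" and t: "t \<in> cell n a"
  show "t \<in> cbox 0 One" unfolding mem_box_cart
  proof
    fix j
    have "0 \<le> real_of_int (a $ j) / 2 ^ n" using a by (simp add: An_def)
    moreover have "a $ j < 2 ^ n" using a by (simp add: An_def)
    then have "a $ j + 1 \<le> 2 ^ n" by linarith
    then have "real_of_int (a $ j + 1) \<le> real_of_int ((2::int) ^ n)" by (simp only: of_int_le_iff)
    then have "real_of_int (a $ j) + 1 \<le> 2 ^ n" by simp
    then have "(real_of_int (a $ j) + 1) / 2 ^ n \<le> 1" by simp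
    moreover from t have "real_of_int (a $ j) / 2 ^ n \<le> t $ j" "t $ j < (real_of_int (a $ j) + 1) / 2 ^ n"
      by (auto simp: cell_def)
    ultimately have "0 \<le> t $ j \<and> t $ j \<le> 1" by linarith
    then show "(0::real^'m) $ j \<le> t $ j \<and> t $ j \<le> One $ j" by (simp only: One_cart_nth zero_index)
  qed
qed

lemma emeasure_cell: "emeasure lborel (cell n a) = ennreal ((1 / 2 ^ n) ^ CARD('m))"
  for a :: "int ^ 'm::finite"
proof -
  define l :: "real^'m" where "l = pt n a"
  define u :: "real^'m" where "u = (\<chi> j. (real_of_int (a $ j) + 1) / 2 ^ n)"
  have lu: "\<forall>b\<in>Basis. l \<bullet> b \<le> u \<bullet> b"
    by (auto simp: Basis_vec_def inner_axis l_def u_def pt_def divide_right_mono)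
  have pr: "(\<Prod>b\<in>(Basis::(real^'m) set). (u - l) \<bullet> b) = (1 / 2 ^ n) ^ CARD('m)"
  proof -
    have "(\<Prod>b\<in>(Basis::(real^'m) set). (u - l) \<bullet> b) = (\<Prod>b\<in>(Basis::(real^'m) set). 1 / 2 ^ n)"
      by (intro prod.cong refl) (auto simp: Basis_vec_def inner_axis l_def u_def pt_def diff_divide_distrib[symmetric])
    then show ?thesis by (simp add: DIM_cart)
  qed
  have "box l u \<subseteq> cell n a" by (auto simp: mem_box_cart cell_def l_def u_def pt_def less_imp_le)
  then have "emeasure lborel (box l u) \<le> emeasure lborel (cell n a)" by (intro emeasure_mono) auto
  moreover have "cell n a \<subseteq> cbox l u" by (auto simp: mem_box_cart cell_def l_def u_def pt_def less_imp_le)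
  then have "emeasure lborel (cell n a) \<le> emeasure lborel (cbox l u)" by (intro emeasure_mono) auto
  ultimately show ?thesis using lu pr by (simp add: emeasure_lborel_box_eq emeasure_lborel_cbox_eq)
qed

lemma floor_approx: "(\<lambda>n. real_of_int \<lfloor>2 ^ n * x\<rfloor> / 2 ^ n) \<longlonglongrightarrow> (x::real)"
proof -
  have "(\<lambda>n. x - inverse (2 ^ n)) \<longlonglongrightarrow> x - 0"
    by (intro tendsto_diff tendsto_const LIMSEQ_inverse_realpow_zero) simp
  then have lim1: "(\<lambda>n. x - inverse (2 ^ n)) \<longlonglongrightarrow> x" by (simp only: diff_zero)
  have lo: "x - inverse (2 ^ n) \<le> real_of_int \<lfloor>2 ^ n * x\<rfloor> / 2 ^ n" for n :: nat
  proof -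
    have "2 ^ n * x - 1 \<le> real_of_int \<lfloor>2 ^ n * x\<rfloor>" by linarith
    then have "(2 ^ n * x - 1) / 2 ^ n \<le> real_of_int \<lfloor>2 ^ n * x\<rfloor> / 2 ^ n"
      by (intro divide_right_mono) auto
    moreover have "x - inverse (2 ^ n) = (2 ^ n * x - 1) / (2 ^ n :: real)"
      by (simp add: field_simps)
    ultimately show ?thesis by simp
  qed
  have hi: "real_of_int \<lfloor>2 ^ n * x\<rfloor> / 2 ^ n \<le> x" for n :: nat
  proof -
    have "real_of_int \<lfloor>2 ^ n * x\<rfloor> \<le> x * 2 ^ n" using of_int_floor_le[of "2 ^ n * x"] by (simp only: mult.commute)
    then show ?thesis by (simp add: pos_divide_le_eq)
  qed
  show ?thesis
    by (rule tendsto_sandwich[OF always_eventually always_eventually lim1 tendsto_const]) (use lo hi in blast)+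
qed

lemma riemann_count:
  fixes h :: "real ^ 'm::finite \<Rightarrow> bool"
  assumes hm: "{t. h t} \<in> sets borel"
    and hc: "AE t in lborel. eventually (\<lambda>s. h s = h t) (nhds t)"
  shows "(\<lambda>n. real (card {a \<in> An n. h (pt n a)}) / 2 ^ (n * CARD('m)))
           \<longlonglongrightarrow> measure lborel ({t. h t} \<inter> cbox 0 One)"
proof -
  define S where "S n = {a \<in> An n. h (pt n a)}" for n
  define s where "s n t = (\<Sum>a\<in>S n. indicator (cell n a) t :: real)" for n t
  have finS: "finite (S n)" for n by (auto simp: S_def intro: finite_subset[OF _ finite_An])
  have s_eval: "s n t = (if fl n t \<in> S n then 1 else 0)" for n t
  proof -
    have "s n t = (\<Sum>a\<in>S n. if fl n t = a then 1 else 0)"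
      unfolding s_def by (intro sum.cong refl) (simp add: indicator_def cell_iff)
    also have "\<dots> = (if fl n t \<in> S n then 1 else 0)" using finS by simp
    finally show ?thesis .
  qed
  have fin_cell: "emeasure lborel (cell n a) < \<infinity>" for n a
    by (simp add: emeasure_cell)
  have int_s: "integral\<^sup>L lborel (s n) = real (card (S n)) / 2 ^ (n * CARD('m))" for n
  proof -
    have "integral\<^sup>L lborel (s n) = (\<Sum>a\<in>S n. integral\<^sup>L lborel (indicator (cell n a) :: _ \<Rightarrow> real))"
      unfolding s_def by (rule Bochner_Integration.integral_sum[where I="S n" and f="\<lambda>a. indicator (cell n a)"]) (auto simp: emeasure_cell integrable_indicator_iff)
    also have "\<dots> = (\<Sum>a\<in>S n. (1 / 2 ^ n) ^ CARD('m))"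
      by (intro sum.cong refl) (simp add: measure_def emeasure_cell)
    also have "\<dots> = real (card (S n)) / 2 ^ (n * CARD('m))"
      by (simp add: power_mult power_one_over)
    finally show ?thesis .
  qed
  let ?f = "indicator ({t. h t} \<inter> cbox 0 One) :: real^'m \<Rightarrow> real"
  have L: "(\<lambda>n. integral\<^sup>L lborel (s n)) \<longlonglongrightarrow> integral\<^sup>L lborel ?f"
  proof (rule integral_dominated_convergence[where w="indicator (cbox 0 One)"])
    show "?f \<in> borel_measurable lborel" using hm by simp
    show "s n \<in> borel_measurable lborel" for n unfolding s_def by measurable
    show "integrable lborel (indicator (cbox (0::real^'m) One) :: _ \<Rightarrow> real)"
      by (simp add: emeasure_lborel_cbox_eq)
    show "AE t in lborel. norm (s n t) \<le> indicator (cbox 0 One) t" for n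
    proof (rule AE_I2)
      fix t :: "real^'m"
      show "norm (s n t) \<le> indicator (cbox 0 One) t"
      proof (cases "fl n t \<in> S n")
        case True
        then have "t \<in> cbox 0 One" using cell_subset[of "fl n t" n] cell_iff[of t n "fl n t"]
          by (auto simp: S_def)
        then show ?thesis using True by (simp add: s_eval)
      qed (simp add: s_eval)
    qed
    show "AE t in lborel. (\<lambda>n. s n t) \<longlonglongrightarrow> ?f t"
      using hc AE_not_in[OF null_sets_cbox_Diff_box[of "0::real^'m" One]]
    proof eventually_elim
      case (elim t)
      show ?case
      proof (cases "t \<in> cbox 0 One")
        case False
        then have "fl n t \<notin> S n" for n using cell_subset[of "fl n t" n] cell_iff[of t n "fl n t"]
          by (auto simp: S_def)
        then show ?thesis using False by (simp add: s_eval)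
      next
        case True
        with elim have tb: "t \<in> box 0 One" by auto
        have inA: "fl n t \<in> An n" for n
        proof -
          have "0 \<le> \<lfloor>2 ^ n * t $ j\<rfloor> \<and> \<lfloor>2 ^ n * t $ j\<rfloor> < 2 ^ n" for j
          proof -
            have "(0::real^'m) $ j < t $ j \<and> t $ j < (One::real^'m) $ j" using tb unfolding mem_box_cart by blast
            then have "0 < t $ j" "t $ j < 1" by (simp_all only: One_cart_nth zero_index)
            then have "0 \<le> 2 ^ n * t $ j" "2 ^ n * t $ j < 2 ^ n" by auto
            then show ?thesis by (simp add: floor_less_iff)
          qed
          then show ?thesis by (simp add: An_def fl_def)
        qed
        have lim: "(\<lambda>n. pt n (fl n t)) \<longlonglongrightarrow> t"
        proof -
          have "(\<lambda>n. \<chi> j. real_of_int \<lfloor>2 ^ n * t $ j\<rfloor> / 2 ^ n) \<longlonglongrightarrow> (\<chi> j. t $ j)"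
            by (intro tendsto_vec_lambda floor_approx)
          then show ?thesis by (simp add: pt_def fl_def)
        qed
        from elim(1) obtain U where U: "open U" "t \<in> U" "\<forall>s\<in>U. h s = h t"
          by (auto simp: eventually_nhds)
        have "eventually (\<lambda>n. pt n (fl n t) \<in> U) sequentially"
          using lim U by (intro topological_tendstoD) auto
        then have "eventually (\<lambda>n. s n t = ?f t) sequentially"
        proof eventually_elim
          case (elim n)
          then have "h (pt n (fl n t)) = h t" by (rule bspec[OF U(3)])
          then show ?case using True inA by (simp add: s_eval S_def indicator_def)
        qed
        then show ?thesis by (rule tendsto_eventually)
      qed
    qed
  qed
  have I: "integral\<^sup>L lborel ?f = measure lborel ({t. h t} \<inter> cbox 0 One)"
    by (simp only: Bochner_Integration.integral_indicator space_lborel space_borel Int_UNIV_right)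
  have e: "(\<lambda>n. integral\<^sup>L lborel (s n)) = (\<lambda>n. real (card {a \<in> An n. h (pt n a)}) / 2 ^ (n * CARD('m)))"
    by (rule ext) (simp only: int_s S_def)
  show ?thesis using L unfolding e I .
qed

lemma ee_sum: "finite A \<Longrightarrow> ee (\<Sum>j\<in>A. y j) = (\<Prod>j\<in>A. ee (y j))"
  by (simp add: ee_def sum_distrib_left of_real_sum exp_sum)

lemma ee_int [simp]: "ee (of_int k) = 1"
proof -
  have "ee (of_int k) = exp (\<i> * (of_int k * (of_real pi * 2)))"
    by (simp add: ee_def mult_ac)
  then show ?thesis by simp
qed

lemma ee_powi: "ee x powi k = ee (of_int k * x)"
  by (simp add: ee_def exp_power_int mult_ac)

lemma norm_ee [simp]: "cmod (ee x) = 1"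
proof -
  have "ee x = exp (\<i> * of_real (2 * pi * x))" by (simp add: ee_def mult_ac)
  then show ?thesis by (simp only: norm_exp_i_times)
qed

lemma cnj_ee: "cnj (ee x) = ee (- x)"
  by (simp add: ee_def exp_cnj)

lemma torus_param_ee: "torus_param t = (\<chi> j. ee (t $ j))"
  by (simp add: torus_param_def ee_def)

lemma torus_param_in: "torus_param t \<in> torus"
  by (simp add: torus_def torus_param_ee)

lemma laurent_param:
  "laurent D c (torus_param t) = (\<Sum>d\<in>D. c d * ee (dv d \<bullet> t))"
proof -
  have "(\<Prod>j\<in>UNIV. (torus_param t $ j) powi (d $ j)) = ee (dv d \<bullet> t)" for d :: "int ^ 'a"
  proof -
    have "(\<Prod>j\<in>UNIV. (torus_param t $ j) powi (d $ j)) = (\<Prod>j\<in>UNIV. ee (of_int (d $ j) * t $ j))"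
      by (simp add: torus_param_ee ee_powi)
    also have "\<dots> = ee (\<Sum>j\<in>UNIV. of_int (d $ j) * t $ j)" by (simp add: ee_sum)
    also have "(\<Sum>j\<in>UNIV. of_int (d $ j) * t $ j) = dv d \<bullet> t" by (simp add: inner_vec_def dv_def)
    finally show ?thesis .
  qed
  then show ?thesis by (simp add: laurent_def)
qed

lemma ee_continuous [continuous_intros]: "continuous_on A ee"
  unfolding ee_def by (intro continuous_intros)

lemma vec_nth_measurable [measurable]: "(\<lambda>x::'b::{real_normed_vector, second_countable_topology}^'a::finite. x $ j) \<in> borel_measurable borel"
  by (intro borel_measurable_continuous_onI continuous_intros)

lemma powi_measurable [measurable]: "(\<lambda>z::complex. z powi k) \<in> borel_measurable borel"
  unfolding power_int_def by measurable

lemma laurent_measurable [measurable]: "laurent D c \<in> borel_measurable borel"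
  unfolding laurent_def by measurable

lemma torus_measurable [measurable]: "torus \<in> sets borel"
  unfolding torus_def by measurable

lemma torus_param_measurable [measurable]: "torus_param \<in> borel_measurable borel"
  unfolding torus_param_def by (intro borel_measurable_continuous_onI continuous_intros)

lemma grid_eq: "grid n = (\<lambda>a. torus_param (pt n a)) ` An n"
proof -
  have gp: "(\<chi> j. exp (2 * of_real pi * \<i> * of_int (a $ j) / 2 ^ n)) = torus_param (pt n a)" for a :: "int ^ 'a"
    by (simp add: torus_param_def pt_def vec_eq_iff)
  have red: "torus_param (pt n a) = torus_param (pt n (\<chi> j. a $ j mod 2 ^ n))" for a :: "int ^ 'a"
  proof -
    have "ee (real_of_int (a $ j) / 2 ^ n) = ee (real_of_int (a $ j mod 2 ^ n) / 2 ^ n)" for j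
    proof -
      have "a $ j = 2 ^ n * (a $ j div 2 ^ n) + a $ j mod 2 ^ n" by simp
      then have "real_of_int (a $ j) = real_of_int (2 ^ n * (a $ j div 2 ^ n) + a $ j mod 2 ^ n)"
        by (rule arg_cong)
      then have "real_of_int (a $ j) = 2 ^ n * real_of_int (a $ j div 2 ^ n) + real_of_int (a $ j mod 2 ^ n)"
        by (simp only: of_int_add of_int_mult of_int_power of_int_numeral)
      then have "real_of_int (a $ j) / 2 ^ n = real_of_int (a $ j mod 2 ^ n) / 2 ^ n + of_int (a $ j div 2 ^ n)"
        by (simp add: field_simps)
      then show ?thesis by (simp add: ee_add)
    qed
    then show ?thesis by (simp add: torus_param_ee pt_def vec_eq_iff)
  qed
  have "(\<chi> j. a $ j mod 2 ^ n) \<in> An n" for a :: "int ^ 'a" by (simp add: An_def)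
  then show ?thesis unfolding grid_def gp using red by blast
qed

lemma inj_grid: "inj_on (\<lambda>a. torus_param (pt n a)) (An n)"
proof (rule inj_onI)
  fix a b :: "int ^ 'a" assume a: "a \<in> An n" and b: "b \<in> An n"
    and eq: "torus_param (pt n a) = torus_param (pt n b)"
  show "a = b" unfolding vec_eq_iff
  proof
    fix j
    have "ee (real_of_int (a $ j) / 2 ^ n) = ee (real_of_int (b $ j) / 2 ^ n)"
      using eq by (simp add: torus_param_ee pt_def vec_eq_iff)
    moreover have "ee (real_of_int (a $ j) / 2 ^ n) = ee ((real_of_int (a $ j) - real_of_int (b $ j)) / 2 ^ n) * ee (real_of_int (b $ j) / 2 ^ n)"
      by (simp add: ee_add[symmetric] diff_divide_distrib)
    ultimately have "ee ((real_of_int (a $ j) - real_of_int (b $ j)) / 2 ^ n) = 1" by simp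
    then have "(real_of_int (a $ j) - real_of_int (b $ j)) / 2 ^ n \<in> \<int>" by (rule ee_eq_1)
    then obtain k where k: "(real_of_int (a $ j) - real_of_int (b $ j)) / 2 ^ n = of_int k" by (auto elim: Ints_cases)
    then have "real_of_int (a $ j - b $ j) = real_of_int (k * 2 ^ n)" by (simp add: field_simps)
    then have k2: "a $ j - b $ j = k * 2 ^ n" by (metis of_int_eq_iff)
    have "0 \<le> a $ j" "a $ j < 2 ^ n" "0 \<le> b $ j" "b $ j < 2 ^ n" using a b by (auto simp: An_def)
    then have "\<bar>a $ j - b $ j\<bar> < 2 ^ n" unfolding abs_less_iff by linarith
    then have "\<bar>k\<bar> * 2 ^ n < 1 * 2 ^ n" using k2 by (simp add: abs_mult)
    then have "\<bar>k\<bar> < 1" by (subst (asm) mult_less_cancel_right) auto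
    then have "k = 0" by simp
    then show "a $ j = b $ j" using k2 by simp
  qed
qed

lemma card_grid:
  fixes f :: "complex ^ 'a::finite \<Rightarrow> complex"
  shows "card ({z \<in> torus. Q (f z)} \<inter> grid n) = card {a \<in> An n. Q (f (torus_param (pt n a)))}"
proof -
  have "{z \<in> torus. Q (f z)} \<inter> grid n = (\<lambda>a. torus_param (pt n a)) ` {a \<in> An n. Q (f (torus_param (pt n a)))}"
    unfolding grid_eq using torus_param_in by auto
  moreover have "inj_on (\<lambda>a. torus_param (pt n a)) {a \<in> An n. Q (f (torus_param (pt n a)))}"
    by (rule inj_on_subset[OF inj_grid]) auto
  ultimately show ?thesis by (simp add: card_image)
qed

lemma measure_torus:
  fixes f :: "complex ^ 'a::finite \<Rightarrow> complex"
  assumes "{z \<in> torus. Q (f z)} \<in> sets borel"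
  shows "measure torus_measure {z \<in> torus. Q (f z)} = measure lborel ({t. Q (f (torus_param t))} \<inter> cbox 0 One)"
proof -
  let ?U = "{z \<in> torus. Q (f z)}"
  have pre: "torus_param -` ?U = {t. Q (f (torus_param t))}" using torus_param_in by auto
  have m: "{t. Q (f (torus_param t))} \<in> sets borel"
    using measurable_sets_borel[OF torus_param_measurable assms] pre by simp
  have "emeasure torus_measure ?U = emeasure (density lborel (indicator (cbox (0::real^'a) One))) (torus_param -` ?U)"
    unfolding torus_measure_def using assms by (subst emeasure_distr) auto
  also have "\<dots> = (\<integral>\<^sup>+ t. indicator (cbox 0 One) t * indicator (torus_param -` ?U) t \<partial>lborel)"
    using m pre by (subst emeasure_density) auto
  also have "\<dots> = (\<integral>\<^sup>+ t. indicator ({t. Q (f (torus_param t))} \<inter> cbox 0 One) t \<partial>lborel)"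
    unfolding pre by (intro nn_integral_cong) (auto simp: indicator_def)
  also have "\<dots> = emeasure lborel ({t. Q (f (torus_param t))} \<inter> cbox 0 One)"
    using m by (subst nn_integral_indicator) auto
  finally show ?thesis by (simp add: measure_def)
qed

lemma dv_uminus: "dv (- d) = - dv d"
  by (simp add: dv_def vec_eq_iff)

lemma eventually_nhds_open: "open U \<Longrightarrow> t \<in> U \<Longrightarrow> (\<And>s. s \<in> U \<Longrightarrow> P s) \<Longrightarrow> eventually P (nhds t)"
  unfolding eventually_nhds by blast

theorem lemma3:
  fixes D :: "(int ^ 'm::finite) set" and c :: "int ^ 'm \<Rightarrow> complex"
  assumes "finite D" and "0 \<notin> D" and "uminus ` D = D"
    and "\<And>d. d \<in> D \<Longrightarrow> c (- d) = cnj (c d)"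
    and "\<exists>d\<in>D. c d \<noteq> 0"
  defines "f \<equiv> laurent D c"
  defines "Fp \<equiv> {z \<in> torus. Re (f z) > 0}"
      and "Fm \<equiv> {z \<in> torus. Re (f z) < 0}"
      and "F0 \<equiv> {z \<in> torus. f z = 0}"
  shows "((\<lambda>n. real (card (Fp \<inter> grid n)) / 2 ^ (n * CARD('m)))
             \<longlonglongrightarrow> measure torus_measure Fp) \<and>
         ((\<lambda>n. real (card (Fm \<inter> grid n)) / 2 ^ (n * CARD('m)))
             \<longlonglongrightarrow> measure torus_measure Fm) \<and>
         ((\<lambda>n. real (card (F0 \<inter> grid n)) / 2 ^ (n * CARD('m))) \<longlonglongrightarrow> 0)"
proof -
  obtain d0 where d0: "d0 \<in> D" "c d0 \<noteq> 0" using assms(5) by auto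
  define g where "g t = (\<Sum>d\<in>D. c d * ee (dv d \<bullet> t))" for t :: "real^'m"
  have fg: "f (torus_param t) = g t" for t unfolding f_def g_def by (rule laurent_param)
  have g_cont: "continuous_on UNIV g" unfolding g_def ee_def by (intro continuous_intros)
  have g_meas [measurable]: "g \<in> borel_measurable borel" by (rule borel_measurable_continuous_onI[OF g_cont])
  have f_meas [measurable]: "f \<in> borel_measurable borel" unfolding f_def by measurable
  have g_real: "cnj (g t) = g t" for t
  proof -
    have "cnj (g t) = (\<Sum>d\<in>D. c (- d) * ee (dv (- d) \<bullet> t))"
      unfolding g_def by (simp add: cnj_ee assms(4) dv_uminus)
    also have "\<dots> = (\<Sum>d\<in>uminus ` D. c d * ee (dv d \<bullet> t))"
      by (subst sum.reindex) (auto simp: inj_on_def)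
    also have "\<dots> = g t" using assms(3) by (simp add: g_def)
    finally show ?thesis .
  qed
  have re0: "g t = 0" if "Re (g t) = 0" for t
  proof -
    have "Im (cnj (g t)) = Im (g t)" using g_real[of t] by (rule arg_cong)
    then have "Im (g t) = 0" by simp
    then show ?thesis using that by (simp add: complex_eq_iff)
  qed
  have null: "{t. g t = 0} \<in> null_sets lborel"
    using null_zeros_vec[of D d0 c, OF assms(1) d0] by (simp add: g_def)
  have AEnz: "AE t in lborel. g t \<noteq> 0"
    using AE_not_in[OF null] by simp
  have ore: "open {t. Re (g t) > 0}" "open {t. Re (g t) < 0}" "open {t. g t \<noteq> 0}"
    by (auto intro!: open_Collect_less open_Collect_neq continuous_intros g_cont
                     continuous_on_Re[OF g_cont])
  have hp: "AE t in lborel. eventually (\<lambda>s. (0 < Re (g s)) = (0 < Re (g t))) (nhds t)"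
    using AEnz
  proof eventually_elim
    case (elim t)
    then have "Re (g t) \<noteq> 0" using re0 by blast
    then consider "Re (g t) > 0" | "Re (g t) < 0" by linarith
    then show ?case
    proof cases
      case 1 then show ?thesis by (intro eventually_nhds_open[OF ore(1)]) auto
    next
      case 2 then show ?thesis by (intro eventually_nhds_open[OF ore(2)]) auto
    qed
  qed
  have hm: "AE t in lborel. eventually (\<lambda>s. (Re (g s) < 0) = (Re (g t) < 0)) (nhds t)"
    using AEnz
  proof eventually_elim
    case (elim t)
    then have "Re (g t) \<noteq> 0" using re0 by blast
    then consider "Re (g t) > 0" | "Re (g t) < 0" by linarith
    then show ?case
    proof cases
      case 1 then show ?thesis by (intro eventually_nhds_open[OF ore(1)]) auto
    next
      case 2 then show ?thesis by (intro eventually_nhds_open[OF ore(2)]) auto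
    qed
  qed
  have h0: "AE t in lborel. eventually (\<lambda>s. (g s = 0) = (g t = 0)) (nhds t)"
    using AEnz
  proof eventually_elim
    case (elim t)
    then show ?case by (intro eventually_nhds_open[OF ore(3)]) auto
  qed
  have L1: "(\<lambda>n. real (card (Fp \<inter> grid n)) / 2 ^ (n * CARD('m))) \<longlonglongrightarrow> measure torus_measure Fp"
  proof -
    have c: "card (Fp \<inter> grid n) = card {a \<in> An n. 0 < Re (g (pt n a))}" for n
      using card_grid[of "\<lambda>w. 0 < Re w" f n] by (simp add: Fp_def fg)
    have "Fp \<in> sets borel" unfolding Fp_def by measurable
    then have m: "measure torus_measure Fp = measure lborel ({t. 0 < Re (g t)} \<inter> cbox 0 One)"
      using measure_torus[of "\<lambda>w. 0 < Re w" f] by (simp add: Fp_def fg)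
    show ?thesis unfolding c m by (rule riemann_count[OF _ hp]) measurable
  qed
  have L2: "(\<lambda>n. real (card (Fm \<inter> grid n)) / 2 ^ (n * CARD('m))) \<longlonglongrightarrow> measure torus_measure Fm"
  proof -
    have c: "card (Fm \<inter> grid n) = card {a \<in> An n. Re (g (pt n a)) < 0}" for n
      using card_grid[of "\<lambda>w. Re w < 0" f n] by (simp add: Fm_def fg)
    have "Fm \<in> sets borel" unfolding Fm_def by measurable
    then have m: "measure torus_measure Fm = measure lborel ({t. Re (g t) < 0} \<inter> cbox 0 One)"
      using measure_torus[of "\<lambda>w. Re w < 0" f] by (simp add: Fm_def fg)
    show ?thesis unfolding c m by (rule riemann_count[OF _ hm]) measurable
  qed
  have L3: "(\<lambda>n. real (card (F0 \<inter> grid n)) / 2 ^ (n * CARD('m))) \<longlonglongrightarrow> 0"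
  proof -
    have c: "card (F0 \<inter> grid n) = card {a \<in> An n. g (pt n a) = 0}" for n
      using card_grid[of "\<lambda>w. w = 0" f n] by (simp add: F0_def fg)
    have "{t. g t = 0} \<inter> cbox 0 One \<in> null_sets lborel"
      by (rule null_sets_subset[OF null]) auto
    then have m: "measure lborel ({t. g t = 0} \<inter> cbox 0 One) = 0"
      by (simp add: measure_def null_setsD1)
    have "(\<lambda>n. real (card {a \<in> An n. g (pt n a) = 0}) / 2 ^ (n * CARD('m))) \<longlonglongrightarrow> measure lborel ({t. g t = 0} \<inter> cbox 0 One)"
      by (rule riemann_count[OF _ h0]) measurable
    then show ?thesis unfolding c m .
  qed
  show ?thesis using L1 L2 L3 by blast
qed

end
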